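(* Let $M=(S,\mathrm{Act},P)$ be an MDP, $T\subseteq S$, $\mathrm{opt}\in\{\min,\max\}$, $r$ the least fixed point of $\tilde D^{\mathrm{opt}}$, $Z=\{s\in S\mid\Pr^{\mathrm{opt}}_s(\Diamond T)=0\}$, and $\sigma$ a strategy with $\Pr^\sigma_s(\Diamond T)=\Pr^{\mathrm{opt}}_s(\Diamond T)$ for all $s\in S$. For $s\in S$ let $z(s)$ be the probability, in the Markov chain induced by $\sigma$ started at $s$, of the set of paths $s_0s_1\ldots$ for which there is $i$ with $s_i\in Z$ and $s_j\notin T$ for all $j<i$. Then for all $s\in S$: $z(s)>0$ implies $r(s)<\infty$.
   Context: An MDP is a tuple $M=(S,\mathrm{Act},P)$ with $S$ finite, $\mathrm{Act}$ finite, $P\colon S\times\mathrm{Act}\times S\to[0,1]$ with $\sum_{s'}P(s,a,s')\in\{0,1\}$; $\mathrm{Act}(s)=\{a\mid\sum_{s'}P(s,a,s')=1\}$ is nonempty for all $s$; $\mathrm{Post}(s,a)=\{s'\mid P(s,a,s')>0\}$. A strategy is $\sigma\colon S\to\mathrm{Act}$ with $\sigma(s)\in\mathrm{Act}(s)$, inducing a Markov chain with transitions $P(s,\sigma(s),\cdot)$; $\Pr^\sigma_s(\Diamond T)$ is the probability of visiting $T$ from $s$ and $\Pr^{\mathrm{opt}}_s(\Diamond T)=\mathrm{opt}_\sigma\Pr^\sigma_s(\Diamond T)$. $\mathbb{N}_\infty=\mathbb{N}\cup\{\infty\}$ with $\infty+1=\infty$. $\tilde D^{\mathrm{opt}}(r)(s)=\infty$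 for $s\in T$ and $\mathrm{opt}_{a\in\mathrm{Act}(s)}\big(\min_{s'\in\mathrm{Post}(s,a)}r(s')+[\exists u,v\in\mathrm{Post}(s,a)\colon r(u)\ne r(v)]\big)$ for $s\notin T$ ($[\varphi]\in\{0,1\}$ the Iverson bracket); its least fixed point w.r.t. the pointwise order exists. *)

theory Defs
  imports Complex_Main "HOL-Library.Extended_Nat"
begin

definition Act :: "('s \<Rightarrow> 'a \<Rightarrow> 's \<Rightarrow> real) \<Rightarrow> 's \<Rightarrow> 'a set" where
  "Act P s = {a. (\<Sum>s'\<in>UNIV. P s a s') = 1}"

definition Post :: "('s \<Rightarrow> 'a \<Rightarrow> 's \<Rightarrow> real) \<Rightarrow> 's \<Rightarrow> 'a \<Rightarrow> 's set" where
  "Post P s a = {s'. P s a s' > 0}"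

definition is_mdp :: "('s::finite \<Rightarrow> 'a::finite \<Rightarrow> 's \<Rightarrow> real) \<Rightarrow> bool" where
  "is_mdp P \<longleftrightarrow>
     (\<forall>s a s'. 0 \<le> P s a s' \<and> P s a s' \<le> 1) \<and>
     (\<forall>s a. (\<Sum>s'\<in>UNIV. P s a s') \<in> {0, 1}) \<and>
     (\<forall>s. Act P s \<noteq> {})"

definition is_strategy :: "('s \<Rightarrow> 'a \<Rightarrow> 's \<Rightarrow> real) \<Rightarrow> ('s \<Rightarrow> 'a) \<Rightarrow> bool" where
  "is_strategy P \<sigma> \<longleftrightarrow> (\<forall>s. \<sigma> s \<in> Act P s)"

text \<open>Probability, in the Markov chain induced by strategy \<sigma>, of the paths
  starting in s that reach B within n steps while all earlier states lie in A
  (i.e. there is i \<le> n with s_i \<in> B and s_j \<in> A for all j < i).\<close>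

fun until_bounded ::
  "('s::finite \<Rightarrow> 'a \<Rightarrow> 's \<Rightarrow> real) \<Rightarrow> ('s \<Rightarrow> 'a) \<Rightarrow> 's set \<Rightarrow> 's set \<Rightarrow> nat \<Rightarrow> 's \<Rightarrow> real" where
  "until_bounded P \<sigma> A B 0 s = (if s \<in> B then 1 else 0)"
| "until_bounded P \<sigma> A B (Suc n) s =
     (if s \<in> B then 1 else if s \<notin> A then 0
      else (\<Sum>s'\<in>UNIV. P s (\<sigma> s) s' * until_bounded P \<sigma> A B n s'))"

text \<open>Unbounded version: the probability of the (countable union of the
  increasing) events, i.e. the supremum of the step-bounded probabilities.\<close>

definition until_prob ::
  "('s::finite \<Rightarrow> 'a \<Rightarrow> 's \<Rightarrow> real) \<Rightarrow> ('s \<Rightarrow> 'a) \<Rightarrow> 's set \<Rightarrow> 's set \<Rightarrow> 's \<Rightarrow> real" where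
  "until_prob P \<sigma> A B s = (SUP n. until_bounded P \<sigma> A B n s)"

definition reach_prob ::
  "('s::finite \<Rightarrow> 'a \<Rightarrow> 's \<Rightarrow> real) \<Rightarrow> ('s \<Rightarrow> 'a) \<Rightarrow> 's set \<Rightarrow> 's \<Rightarrow> real" where
  "reach_prob P \<sigma> T s = until_prob P \<sigma> UNIV T s"

datatype optdir = Minimize | Maximize

definition opt_reach_prob ::
  "optdir \<Rightarrow> ('s::finite \<Rightarrow> 'a \<Rightarrow> 's \<Rightarrow> real) \<Rightarrow> 's set \<Rightarrow> 's \<Rightarrow> real" where
  "opt_reach_prob opt P T s =
     (case opt of
        Minimize \<Rightarrow> (INF \<sigma>\<in>{\<sigma>. is_strategy P \<sigma>}. reach_prob P \<sigma> T s)
      | Maximize \<Rightarrow> (SUP \<sigma>\<in>{\<sigma>. is_strategy P \<sigma>}. reach_prob P \<sigma> T s))"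

definition Dtilde ::
  "optdir \<Rightarrow> ('s::finite \<Rightarrow> 'a::finite \<Rightarrow> 's \<Rightarrow> real) \<Rightarrow> 's set \<Rightarrow> ('s \<Rightarrow> enat) \<Rightarrow> ('s \<Rightarrow> enat)" where
  "Dtilde opt P T r s =
     (if s \<in> T then \<infinity>
      else
        let val = (\<lambda>a. Min (r ` Post P s a) +
                      (if \<exists>u\<in>Post P s a. \<exists>v\<in>Post P s a. r u \<noteq> r v then 1 else 0))
        in (case opt of
              Minimize \<Rightarrow> Min (val ` Act P s)
            | Maximize \<Rightarrow> Max (val ` Act P s)))"

end

theory Submission
  imports Defs
begin

lemma ub_bounds:
  fixes P :: "'s::finite \<Rightarrow> 'a \<Rightarrow> 's \<Rightarrow> real"
  assumes P0: "\<forall>s a s'. 0 \<le> P s a s'" and strat: "is_strategy P \<tau>"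
  shows "0 \<le> until_bounded P \<tau> A B n s \<and> until_bounded P \<tau> A B n s \<le> 1"
proof (induction n arbitrary: s)
  case 0 then show ?case by simp
next
  case (Suc n)
  have sum1: "(\<Sum>s'\<in>UNIV. P s (\<tau> s) s') = 1" using strat by (simp add: is_strategy_def Act_def)
  have "(\<Sum>s'\<in>UNIV. P s (\<tau> s) s' * until_bounded P \<tau> A B n s') \<le> (\<Sum>s'\<in>UNIV. P s (\<tau> s) s')"
    by (rule sum_mono) (use Suc P0 in \<open>simp add: mult_left_le\<close>)
  moreover have "0 \<le> (\<Sum>s'\<in>UNIV. P s (\<tau> s) s' * until_bounded P \<tau> A B n s')"
    by (rule sum_nonneg) (use Suc P0 in simp)
  ultimately show ?case using sum1 by auto
qed

lemma ub_Suc_mono: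
  fixes P :: "'s::finite \<Rightarrow> 'a \<Rightarrow> 's \<Rightarrow> real"
  assumes P0: "\<forall>s a s'. 0 \<le> P s a s'" and strat: "is_strategy P \<tau>"
  shows "until_bounded P \<tau> A B n s \<le> until_bounded P \<tau> A B (Suc n) s"
proof (induction n arbitrary: s)
  case 0 show ?case using ub_bounds[OF assms, of A B "Suc 0" s] by auto
next
  case (Suc n)
  have "(\<Sum>s'\<in>UNIV. P s (\<tau> s) s' * until_bounded P \<tau> A B n s')
     \<le> (\<Sum>s'\<in>UNIV. P s (\<tau> s) s' * until_bounded P \<tau> A B (Suc n) s')"
    by (rule sum_mono) (use Suc P0 in \<open>simp add: mult_left_mono\<close>)
  then show ?case
    unfolding until_bounded.simps(2)[of P \<tau> A B n s] until_bounded.simps(2)[of P \<tau> A B "Suc n" s]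
    by auto
qed

lemma ub_mono:
  fixes P :: "'s::finite \<Rightarrow> 'a \<Rightarrow> 's \<Rightarrow> real"
  assumes P0: "\<forall>s a s'. 0 \<le> P s a s'" and strat: "is_strategy P \<tau>" and "m \<le> n"
  shows "until_bounded P \<tau> A B m s \<le> until_bounded P \<tau> A B n s"
  using lift_Suc_mono_le[of "\<lambda>n. until_bounded P \<tau> A B n s", OF ub_Suc_mono[OF P0 strat] \<open>m \<le> n\<close>] .

lemma ub_le_until:
  fixes P :: "'s::finite \<Rightarrow> 'a \<Rightarrow> 's \<Rightarrow> real"
  assumes P0: "\<forall>s a s'. 0 \<le> P s a s'" and strat: "is_strategy P \<tau>"
  shows "until_bounded P \<tau> A B n s \<le> until_prob P \<tau> A B s"
    and "until_prob P \<tau> A B s \<le> 1" and "0 \<le> until_prob P \<tau> A B s"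
proof -
  have bdd: "bdd_above (range (\<lambda>n. until_bounded P \<tau> A B n s))"
    using ub_bounds[OF assms] by (intro bdd_aboveI2[where M=1]) auto
  show ub: "until_bounded P \<tau> A B n s \<le> until_prob P \<tau> A B s" for n
    unfolding until_prob_def by (rule cSUP_upper[OF _ bdd]) auto
  show "until_prob P \<tau> A B s \<le> 1"
    unfolding until_prob_def by (rule cSUP_least) (use ub_bounds[OF assms] in auto)
  show "0 \<le> until_prob P \<tau> A B s"
    using ub_bounds[OF assms, of A B 0 s] ub[of 0]
    by (meson order_trans)
qed

lemma val_mono:
  fixes r r' :: "'s \<Rightarrow> enat"
  assumes "r \<le> r'" and fin: "finite A"
  shows "Min (r ` A) + (if \<exists>u\<in>A. \<exists>v\<in>A. r u \<noteq> r v then 1 else 0)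
       \<le> Min (r' ` A) + (if \<exists>u\<in>A. \<exists>v\<in>A. r' u \<noteq> r' v then 1 else 0)"
proof (cases "A = {}")
  case True then show ?thesis by simp
next
  case False
  have "Min (r' ` A) \<in> r' ` A" by (rule Min_in) (use fin False in auto)
  then obtain x0 where x0: "x0 \<in> A" "Min (r' ` A) = r' x0" by auto
  have rle: "r x \<le> r' x" for x using assms(1) by (simp add: le_fun_def)
  have mm: "Min (r ` A) \<le> Min (r' ` A)"
  proof -
    have "Min (r ` A) \<le> r x0" using x0(1) fin by simp
    from order_trans[OF this rle[of x0]] show ?thesis using x0(2) by simp
  qed
  define b where "b = (\<exists>u\<in>A. \<exists>v\<in>A. r u \<noteq> r v)"
  define b' where "b' = (\<exists>u\<in>A. \<exists>v\<in>A. r' u \<noteq> r' v)"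
  have "Min (r ` A) + (if b then 1 else 0) \<le> Min (r' ` A) + (if b' then 1 else 0)"
  proof (cases "b \<and> \<not> b'")
    case False
    then have "(if b then 1 else 0) \<le> (if b' then 1 else (0::enat))"
      by (cases b; cases b') simp_all
    from add_mono[OF mm this] show ?thesis .
  next
    case True
    then obtain u v where uv: "u \<in> A" "v \<in> A" "r u \<noteq> r v" unfolding b_def by blast
    from True have eq: "\<forall>x\<in>A. r' x = r' x0" using x0 unfolding b'_def by blast
    have m1: "Min (r ` A) \<le> r u" "Min (r ` A) \<le> r v" using uv fin by auto
    have m2: "r u \<le> r' x0" "r v \<le> r' x0" using eq uv rle by metis+
    have "r u < r v \<or> r v < r u" using uv(3) by (simp add: neq_iff)
    then have "Min (r ` A) < r' x0"
    proof
      assume "r u < r v" then show ?thesis using m1(1) m2(2) by (meson le_less_trans less_le_trans)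
    next
      assume "r v < r u" then show ?thesis using m1(2) m2(1) by (meson le_less_trans less_le_trans)
    qed
    then have "eSuc (Min (r ` A)) \<le> Min (r' ` A)" using x0(2) by (simp add: ileI1)
    then have "Min (r ` A) + 1 \<le> Min (r' ` A)" by (simp add: eSuc_plus_1)
    then show ?thesis using True by simp
  qed
  then show ?thesis unfolding b_def b'_def .
qed

lemma Dtilde_mono:
  fixes P :: "'s::finite \<Rightarrow> 'a::finite \<Rightarrow> 's \<Rightarrow> real"
  assumes mdp: "is_mdp P"
  shows "mono (Dtilde opt P T)"
proof (rule monoI, rule le_funI)
  fix r r' :: "'s \<Rightarrow> enat" and s assume rr: "r \<le> r'"
  show "Dtilde opt P T r s \<le> Dtilde opt P T r' s"
  proof (cases "s \<in> T")
    case True then show ?thesis by (simp add: Dtilde_def)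
  next
    case False
    define v where "v = (\<lambda>r a. Min (r ` Post P s a) + (if \<exists>u\<in>Post P s a. \<exists>v\<in>Post P s a. r u \<noteq> r v then 1 else (0::enat)))"
    have vm: "v r a \<le> v r' a" for a unfolding v_def by (rule val_mono[OF rr]) simp
    have ne: "Act P s \<noteq> {}" using mdp by (simp add: is_mdp_def)
    have fin: "finite (Act P s)" by simp
    have D: "Dtilde opt P T q s = (case opt of Minimize \<Rightarrow> Min (v q ` Act P s) | Maximize \<Rightarrow> Max (v q ` Act P s))" for q
      using False unfolding Dtilde_def v_def Let_def by simp
    show ?thesis
    proof (cases opt)
      case Minimize
      have "Min (v r' ` Act P s) \<in> v r' ` Act P s" by (rule Min_in) (use fin ne in auto)
      then obtain a where a: "a \<in> Act P s" "Min (v r' ` Act P s) = v r' a" by auto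
      have h: "Min (v r ` Act P s) \<le> v r a" using a fin by auto
      show ?thesis using D[of r] D[of r'] Minimize order_trans[OF h vm[of a]] a(2) by simp
    next
      case Maximize
      have "Max (v r ` Act P s) \<in> v r ` Act P s" by (rule Max_in) (use fin ne in auto)
      then obtain a where a: "a \<in> Act P s" "Max (v r ` Act P s) = v r a" by auto
      have h: "v r' a \<le> Max (v r' ` Act P s)" using a fin by auto
      show ?thesis using D[of r] D[of r'] Maximize order_trans[OF vm[of a] h] a(2) by simp
    qed
  qed
qed


lemma reach_one:
  fixes P :: "'s::finite \<Rightarrow> 'a \<Rightarrow> 's \<Rightarrow> real"
  assumes P0: "\<forall>s a s'. 0 \<le> P s a s'" and strat: "is_strategy P \<tau>"
    and lev0: "\<forall>s\<in>Q. lev s = 0 \<longrightarrow> s \<in> T"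
    and levS: "\<forall>s\<in>Q. \<forall>j. lev s = Suc j \<longrightarrow> s \<notin> T \<longrightarrow> (\<exists>s'\<in>Q. P s (\<tau> s) s' > 0 \<and> lev s' \<le> j)"
    and closed: "\<forall>s\<in>Q. s \<notin> T \<longrightarrow> (\<forall>s'. P s (\<tau> s) s' > 0 \<longrightarrow> s' \<in> Q)"
    and sQ: "s \<in> Q"
  shows "reach_prob P \<tau> T s = 1"
proof -
  define f where "f = (\<lambda>n s. until_bounded P \<tau> UNIV T n s)"
  have fb: "0 \<le> f n x" "f n x \<le> 1" for n x using ub_bounds[OF P0 strat] unfolding f_def by auto
  have sum1: "(\<Sum>s'\<in>UNIV. P x (\<tau> x) s') = 1" for x using strat by (simp add: is_strategy_def Act_def)
  have fT: "x \<in> T \<Longrightarrow> f n x = 1" for n x unfolding f_def by (cases n) auto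
  have fS: "x \<notin> T \<Longrightarrow> f (Suc n) x = (\<Sum>s'\<in>UNIV. P x (\<tau> x) s' * f n s')" for n x
    unfolding f_def by simp
  have pos: "\<forall>x\<in>Q. lev x = j \<longrightarrow> (\<forall>n\<ge>j. f n x > 0)" for j
  proof (induction j rule: less_induct)
    case (less j)
    show ?case
    proof (intro ballI impI allI)
      fix x n assume xQ: "x \<in> Q" and lx: "lev x = j" and nj: "j \<le> n"
      show "f n x > 0"
      proof (cases "x \<in> T")
        case True then show ?thesis using fT by simp
      next
        case False
        then obtain j' where j': "j = Suc j'" using lev0 xQ lx by (cases j) auto
        then obtain s' where s': "s' \<in> Q" "P x (\<tau> x) s' > 0" "lev s' \<le> j'"
          using levS xQ lx False by blast
        obtain n' where n': "n = Suc n'" "j' \<le> n'" using nj j' by (cases n) auto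
        have "f n' s' > 0" using less.IH[of "lev s'"] s' j' n' by auto
        then have "0 < P x (\<tau> x) s' * f n' s'" using s' by simp
        also have "\<dots> \<le> (\<Sum>s'\<in>UNIV. P x (\<tau> x) s' * f n' s')"
          by (rule member_le_sum) (use P0 fb in auto)
        finally show ?thesis using fS[OF False] n' by simp
      qed
    qed
  qed
  define N where "N = Max (lev ` Q)"
  have finQ: "finite Q" by simp
  have fNpos: "x \<in> Q \<Longrightarrow> f N x > 0" for x
    using pos[of "lev x"] N_def finQ by auto
  define \<delta> where "\<delta> = Min ((\<lambda>x. f N x) ` Q)"
  have "\<delta> \<in> (\<lambda>x. f N x) ` Q" unfolding \<delta>_def by (rule Min_in) (use sQ finQ in auto)
  then have dpos: "\<delta> > 0" "\<delta> \<le> 1" using fNpos fb by auto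
  have dle: "x \<in> Q \<Longrightarrow> \<delta> \<le> f N x" for x unfolding \<delta>_def using finQ by simp
  have submult: "\<forall>x\<in>Q. 1 - f (m + n) x \<le> (1 - f m x) * c"
    if c0: "0 \<le> c" and hc: "\<forall>x\<in>Q. 1 - f n x \<le> c" for n m c
  proof (induction m)
    case 0
    show ?case
    proof
      fix x assume "x \<in> Q"
      show "1 - f (0 + n) x \<le> (1 - f 0 x) * c"
        using hc \<open>x \<in> Q\<close> fT[of x] by (cases "x \<in> T") (auto simp: f_def)
    qed
  next
    case (Suc m)
    show ?case
    proof
      fix x assume xQ: "x \<in> Q"
      show "1 - f (Suc m + n) x \<le> (1 - f (Suc m) x) * c"
      proof (cases "x \<in> T")
        case True then show ?thesis using fT by simp
      next
        case False
        have e1: "1 - f (Suc m + n) x = (\<Sum>s'\<in>UNIV. P x (\<tau> x) s' * (1 - f (m + n) s'))"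
          using fS[OF False, of "m+n"] sum1[of x] by (simp add: algebra_simps sum_subtractf sum_distrib_left)
        have e2a: "(\<Sum>s'\<in>UNIV. P x (\<tau> x) s' * ((1 - f m s') * c)) = c * (\<Sum>s'\<in>UNIV. P x (\<tau> x) s') - c * (\<Sum>s'\<in>UNIV. P x (\<tau> x) s' * f m s')"
          by (simp add: algebra_simps sum_subtractf sum_distrib_left)
        have e2: "(1 - f (Suc m) x) * c = (\<Sum>s'\<in>UNIV. P x (\<tau> x) s' * ((1 - f m s') * c))"
          using e2a fS[OF False, of m] sum1[of x] by (simp add: algebra_simps)
        have "(\<Sum>s'\<in>UNIV. P x (\<tau> x) s' * (1 - f (m + n) s')) \<le> (\<Sum>s'\<in>UNIV. P x (\<tau> x) s' * ((1 - f m s') * c))"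
        proof (rule sum_mono)
          fix y
          show "P x (\<tau> x) y * (1 - f (m + n) y) \<le> P x (\<tau> x) y * ((1 - f m y) * c)"
          proof (cases "P x (\<tau> x) y > 0")
            case True
            then have "y \<in> Q" using closed xQ False by blast
            then show ?thesis using Suc True by (intro mult_left_mono) auto
          next
            case False
            then have "P x (\<tau> x) y = 0" using P0[rule_format, of x "\<tau> x" y] by linarith
            then show ?thesis by simp
          qed
        qed
        then show ?thesis using e1 e2 by simp
      qed
    qed
  qed
  have decay: "\<forall>x\<in>Q. 1 - f (k * N) x \<le> (1 - \<delta>) ^ k" for k
  proof (induction k)
    case 0 then show ?case using fb by simp
  next
    case (Suc k)
    have "\<forall>x\<in>Q. 1 - f (N + k * N) x \<le> (1 - f N x) * (1 - \<delta>) ^ k"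
      by (rule submult) (use Suc dpos in auto)
    moreover have "(1 - f N x) * (1 - \<delta>) ^ k \<le> (1 - \<delta>) * (1 - \<delta>) ^ k" if "x \<in> Q" for x
      by (rule mult_right_mono) (use dle[OF that] dpos in auto)
    ultimately show ?case by (auto simp: add.commute intro: order_trans)
  qed
  have bdd: "bdd_above (range (\<lambda>n. f n s))" using fb by (intro bdd_aboveI2[where M=1]) auto
  have R: "reach_prob P \<tau> T s = (SUP n. f n s)" unfolding reach_prob_def until_prob_def f_def by simp
  have le1: "(SUP n. f n s) \<le> 1" by (rule cSUP_least) (use fb in auto)
  have ge1: "(SUP n. f n s) \<ge> 1"
  proof (rule ccontr)
    assume "\<not> (SUP n. f n s) \<ge> 1"
    then have "1 - (SUP n. f n s) > 0" by simp
    from real_arch_pow_inv[OF this, of "1 - \<delta>"] dpos obtain k where k: "(1 - \<delta>) ^ k < 1 - (SUP n. f n s)" by auto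
    have "f (k * N) s \<le> (SUP n. f n s)" by (rule cSUP_upper[OF _ bdd]) simp
    then show False using decay[of k] sQ k by auto
  qed
  show ?thesis using R le1 ge1 by simp
qed

lemma fg_le1:
  fixes P :: "'s::finite \<Rightarrow> 'a \<Rightarrow> 's \<Rightarrow> real"
  assumes P0: "\<forall>s a s'. 0 \<le> P s a s'" and strat: "is_strategy P \<tau>"
    and Zf: "\<forall>z\<in>Z. \<forall>n. until_bounded P \<tau> UNIV T n z = 0" and ZT: "Z \<inter> T = {}"
  shows "until_bounded P \<tau> UNIV T n s + until_bounded P \<tau> (- T) Z n s \<le> 1"
proof (induction n arbitrary: s)
  case 0 then show ?case using ZT by auto
next
  case (Suc n)
  have sum1: "(\<Sum>s'\<in>UNIV. P s (\<tau> s) s') = 1" using strat by (simp add: is_strategy_def Act_def)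
  show ?case
  proof (cases "s \<in> T")
    case True then show ?thesis using ZT by auto
  next
    case False
    show ?thesis
    proof (cases "s \<in> Z")
      case True
      have a: "until_bounded P \<tau> UNIV T (Suc n) s = 0" using Zf True by blast
      have b: "until_bounded P \<tau> (- T) Z (Suc n) s = 1" using True by simp
      show ?thesis unfolding a b by simp
    next
      case False2: False
      have "until_bounded P \<tau> UNIV T (Suc n) s + until_bounded P \<tau> (- T) Z (Suc n) s
          = (\<Sum>s'\<in>UNIV. P s (\<tau> s) s' * (until_bounded P \<tau> UNIV T n s' + until_bounded P \<tau> (- T) Z n s'))"
        using False False2 by (simp add: sum.distrib distrib_left)
      also have "\<dots> \<le> (\<Sum>s'\<in>UNIV. P s (\<tau> s) s')"
        by (rule sum_mono) (use Suc P0 in \<open>simp add: mult_left_le\<close>)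
      finally show ?thesis using sum1 by simp
    qed
  qed
qed


lemma plus_if_inf: "(X::enat) + (if b then 1 else 0) = \<infinity> \<Longrightarrow> X = \<infinity>"
  by (cases X; cases b) (auto simp: one_enat_def)

lemma if01: "(if b then (1::enat) else 0) \<le> 1" by simp

theorem lemma11:
  fixes P :: "'s::finite \<Rightarrow> 'a::finite \<Rightarrow> 's \<Rightarrow> real"
    and T :: "'s set"
    and opt :: optdir
    and \<sigma> :: "'s \<Rightarrow> 'a"
  assumes mdp: "is_mdp P"
    and strat: "is_strategy P \<sigma>"
    and optimal: "\<forall>s. reach_prob P \<sigma> T s = opt_reach_prob opt P T s"
  shows "\<forall>s. until_prob P \<sigma> (- T) {s'. opt_reach_prob opt P T s' = 0} s > 0
           \<longrightarrow> lfp (Dtilde opt P T) s < \<infinity>"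
proof (intro allI impI)
  fix s0
  assume zpos0: "until_prob P \<sigma> (- T) {s'. opt_reach_prob opt P T s' = 0} s0 > 0"
  define Z where "Z = {s'. opt_reach_prob opt P T s' = 0}"
  have zpos: "until_prob P \<sigma> (- T) Z s0 > 0" using zpos0 unfolding Z_def .
  define r where "r = lfp (Dtilde opt P T)"
  have P0: "\<forall>s a s'. 0 \<le> P s a s'" using mdp by (simp add: is_mdp_def)
  have actsum: "a \<in> Act P s \<Longrightarrow> (\<Sum>s'\<in>UNIV. P s a s') = 1" for a s by (simp add: Act_def)
  have postne: "a \<in> Act P s \<Longrightarrow> Post P s a \<noteq> {}" for a s
  proof
    assume a: "a \<in> Act P s" and e: "Post P s a = {}"
    have "\<forall>s'. P s a s' = 0" using e P0 unfolding Post_def by (metis empty_iff mem_Collect_eq order_le_less)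
    then show False using actsum[OF a] by simp
  qed
  have actne: "Act P s \<noteq> {}" for s using mdp by (simp add: is_mdp_def)
  have fixp: "Dtilde opt P T r = r" unfolding r_def by (rule lfp_unfold[OF Dtilde_mono[OF mdp], symmetric])
  have reach_le1: "is_strategy P \<tau> \<Longrightarrow> reach_prob P \<tau> T s \<le> 1" for \<tau> s
    unfolding reach_prob_def using ub_le_until(2)[OF P0] by blast
  have Zreach: "until_bounded P \<sigma> UNIV T n z = 0" if "z \<in> Z" for z n
  proof -
    have "reach_prob P \<sigma> T z = 0" using that optimal unfolding Z_def by simp
    then have "until_bounded P \<sigma> UNIV T n z \<le> 0"
      using ub_le_until(1)[OF P0 strat, of UNIV T n z] unfolding reach_prob_def by simp
    then show ?thesis using ub_bounds[OF P0 strat, of UNIV T n z] by simp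
  qed
  have ZT: "Z \<inter> T = {}"
  proof -
    have "z \<notin> T" if "z \<in> Z" for z using Zreach[OF that, of 0] by auto
    then show ?thesis by blast
  qed
  have lt1: "reach_prob P \<sigma> T s0 < 1"
  proof -
    obtain n where n: "until_bounded P \<sigma> (- T) Z n s0 > 0"
    proof (rule ccontr)
      assume "\<not> thesis"
      then have "\<forall>n. until_bounded P \<sigma> (- T) Z n s0 \<le> 0" using that by (meson not_le)
      then have "until_prob P \<sigma> (- T) Z s0 \<le> 0" unfolding until_prob_def by (intro cSUP_least) auto
      then show False using zpos by simp
    qed
    have "until_bounded P \<sigma> UNIV T m s0 \<le> 1 - until_bounded P \<sigma> (- T) Z n s0" for m
    proof -
      have "until_bounded P \<sigma> UNIV T m s0 \<le> until_bounded P \<sigma> UNIV T (max m n) s0"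
        by (rule ub_mono[OF P0 strat]) simp
      moreover have "until_bounded P \<sigma> (- T) Z n s0 \<le> until_bounded P \<sigma> (- T) Z (max m n) s0"
        by (rule ub_mono[OF P0 strat]) simp
      moreover have "until_bounded P \<sigma> UNIV T (max m n) s0 + until_bounded P \<sigma> (- T) Z (max m n) s0 \<le> 1"
        by (rule fg_le1[OF P0 strat _ ZT]) (use Zreach in blast)
      ultimately show ?thesis by linarith
    qed
    then have "reach_prob P \<sigma> T s0 \<le> 1 - until_bounded P \<sigma> (- T) Z n s0"
      unfolding reach_prob_def until_prob_def by (intro cSUP_least) auto
    then show ?thesis using n by linarith
  qed
  show "lfp (Dtilde opt P T) s0 < \<infinity>"
  proof (rule ccontr)
    assume "\<not> lfp (Dtilde opt P T) s0 < \<infinity>"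
    then have r0: "r s0 = \<infinity>" unfolding r_def by simp
    define Q where "Q = {s. r s = \<infinity>}"
    have s0Q: "s0 \<in> Q" using r0 Q_def by simp
    have TQ: "T \<subseteq> Q"
    proof
      fix s assume "s \<in> T"
      then have "Dtilde opt P T r s = \<infinity>" by (simp add: Dtilde_def)
      then show "s \<in> Q" using fixp unfolding Q_def by simp
    qed
    define v where "v = (\<lambda>q s a. Min (q ` Post P s a) + (if \<exists>x\<in>Post P s a. \<exists>y\<in>Post P s a. q x \<noteq> q y then 1 else (0::enat)))"
    have Du: "Dtilde opt P T q s = (case opt of Minimize \<Rightarrow> Min (v q s ` Act P s) | Maximize \<Rightarrow> Max (v q s ` Act P s))"
      if "s \<notin> T" for q s
      using that unfolding Dtilde_def v_def Let_def by simp
    have minclosed: "Post P s a \<subseteq> Q"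
      if "opt = Minimize" "s \<in> Q" "s \<notin> T" "a \<in> Act P s" for s a
    proof
      fix s' assume s': "s' \<in> Post P s a"
      have "Min (v r s ` Act P s) = \<infinity>" using Du[OF that(3), of r] fixp that(1,2) unfolding Q_def by simp
      moreover have "Min (v r s ` Act P s) \<le> v r s a" using that(4) by simp
      ultimately have "v r s a = \<infinity>" by simp
      then have "Min (r ` Post P s a) = \<infinity>" unfolding v_def by (rule plus_if_inf)
      moreover have "Min (r ` Post P s a) \<le> r s'" using s' by simp
      ultimately show "s' \<in> Q" unfolding Q_def by simp
    qed
    define C where "C = (\<lambda>A s. case opt of Minimize \<Rightarrow> (\<forall>a\<in>Act P s. Post P s a \<inter> A \<noteq> {})
                          | Maximize \<Rightarrow> (\<exists>a\<in>Act P s. Post P s a \<subseteq> Q \<and> Post P s a \<inter> A \<noteq> {}))"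
    define L where "L = (\<lambda>k. ((\<lambda>A. A \<union> {s\<in>Q. C A s}) ^^ k) T)"
    have L0: "L 0 = T" unfolding L_def by simp
    have LS: "L (Suc k) = L k \<union> {s\<in>Q. C (L k) s}" for k unfolding L_def by simp
    have Lmono: "k \<le> k' \<Longrightarrow> L k \<subseteq> L k'" for k k'
      by (rule lift_Suc_mono_le[of L]) (auto simp: LS)
    define W where "W = (\<Union>k. L k)"
    have CW: "s \<in> W" if sQ: "s \<in> Q" and cw: "C W s" for s
    proof (cases opt)
      case Maximize
      then obtain a s' where a: "a \<in> Act P s" "Post P s a \<subseteq> Q" "s' \<in> Post P s a" "s' \<in> W"
        using cw unfolding C_def by auto
      then obtain k where "s' \<in> L k" unfolding W_def by auto
      then have "C (L k) s" unfolding C_def using Maximize a by auto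
      then have "s \<in> L (Suc k)" using LS sQ by auto
      then show ?thesis unfolding W_def by auto
    next
      case Minimize
      have "\<forall>a\<in>Act P s. \<exists>k. Post P s a \<inter> L k \<noteq> {}"
      proof
        fix a assume "a \<in> Act P s"
        then obtain x where "x \<in> Post P s a" "x \<in> W" using cw Minimize unfolding C_def by auto
        then show "\<exists>k. Post P s a \<inter> L k \<noteq> {}" unfolding W_def by auto
      qed
      then obtain ka where ka: "\<forall>a\<in>Act P s. Post P s a \<inter> L (ka a) \<noteq> {}" by metis
      define K where "K = Max (ka ` Act P s)"
      have "Post P s a \<inter> L K \<noteq> {}" if "a \<in> Act P s" for a
      proof -
        have "ka a \<le> K" unfolding K_def using that by simp
        then show ?thesis using ka that Lmono by blast
      qed
      then have "C (L K) s" unfolding C_def using Minimize by auto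
      then have "s \<in> L (Suc K)" using LS sQ by auto
      then show ?thesis unfolding W_def by auto
    qed
    have QW: "Q \<subseteq> W"
    proof (rule ccontr)
      assume "\<not> Q \<subseteq> W"
      define Y where "Y = Q - W"
      obtain y where yY: "y \<in> Y" using \<open>\<not> Q \<subseteq> W\<close> Y_def by auto
      have YT: "s \<in> Y \<Longrightarrow> s \<notin> T" for s unfolding Y_def W_def using L0 by auto
      have notC: "s \<in> Y \<Longrightarrow> \<not> C W s" for s using CW unfolding Y_def by auto
      define F where "F = - Q"
      define M where "M = Max (insert 0 (r ` F))"
      have Mfin: "M \<noteq> \<infinity>"
      proof -
        have "M \<in> insert 0 (r ` F)" unfolding M_def by (rule Max_in) auto
        then show ?thesis unfolding F_def Q_def by (auto simp: zero_enat_def)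
      qed
      define K where "K = eSuc M"
      have Kfin: "K \<noteq> \<infinity>" unfolding K_def using Mfin by (cases M) (auto simp: eSuc_enat)
      have rF: "r s + 1 \<le> K" if "s \<in> F" for s
      proof -
        have "r s \<le> M" unfolding M_def using that by simp
        then show ?thesis unfolding K_def by (simp add: eSuc_plus_1)
      qed
      define u where "u = (\<lambda>s. if s \<in> Y then K else r s)"
      have ur: "u \<le> r" unfolding u_def Y_def Q_def by (auto simp: le_fun_def)
      have vY: "v u s a = K" if "Post P s a \<subseteq> Y" "Post P s a \<noteq> {}" for s a
      proof -
        have im: "u ` Post P s a = {K}" using that unfolding u_def by auto
        have nb: "\<not> (\<exists>x\<in>Post P s a. \<exists>y\<in>Post P s a. u x \<noteq> u y)" using that unfolding u_def by auto
        show ?thesis unfolding v_def im if_not_P[OF nb] by simp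
      qed
      have vF: "v u s a \<le> K" if "f \<in> Post P s a" "f \<in> F" for s a f
      proof -
        have "Min (u ` Post P s a) \<le> u f" using that(1) by simp
        also have "\<dots> = r f" unfolding u_def Y_def F_def using that(2) unfolding F_def by auto
        finally have m: "Min (u ` Post P s a) \<le> r f" .
        have b: "(if \<exists>x\<in>Post P s a. \<exists>y\<in>Post P s a. u x \<noteq> u y then 1 else (0::enat)) \<le> 1" by (rule if01)
        have "v u s a \<le> r f + 1" unfolding v_def by (rule add_mono[OF m b])
        then show ?thesis using rF[OF that(2)] by simp
      qed
      have pre: "Dtilde opt P T u \<le> u"
      proof (rule le_funI)
        fix s
        show "Dtilde opt P T u s \<le> u s"
        proof (cases "s \<in> Y")
          case True
          have sT: "s \<notin> T" using YT True .
          have sQ: "s \<in> Q" using True Y_def by simp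
          have us: "u s = K" using True u_def by simp
          show ?thesis
          proof (cases opt)
            case Minimize
            obtain a where a: "a \<in> Act P s" "Post P s a \<inter> W = {}"
              using notC[OF True] Minimize unfolding C_def by auto
            have "Post P s a \<subseteq> Q" using minclosed[OF Minimize sQ sT a(1)] .
            then have "Post P s a \<subseteq> Y" using a(2) unfolding Y_def by auto
            then have "v u s a = K" using vY postne[OF a(1)] by simp
            moreover have "Min (v u s ` Act P s) \<le> v u s a" using a(1) by simp
            ultimately show ?thesis using Du[OF sT, of u] Minimize us by simp
          next
            case Maximize
            have "v u s a \<le> K" if a: "a \<in> Act P s" for a
            proof (cases "Post P s a \<subseteq> Q")
              case True
              then have "Post P s a \<inter> W = {}" using notC[OF \<open>s \<in> Y\<close>] Maximize a unfolding C_def by auto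
              then have "Post P s a \<subseteq> Y" using True unfolding Y_def by auto
              then show ?thesis using vY postne[OF a] by simp
            next
              case False
              then obtain f where "f \<in> Post P s a" "f \<in> F" unfolding F_def by auto
              then show ?thesis using vF by blast
            qed
            then have "Max (v u s ` Act P s) \<le> K" using actne[of s] by (simp add: Max_le_iff)
            then show ?thesis using Du[OF sT, of u] Maximize us by simp
          qed
        next
          case False
          show ?thesis
          proof (cases "s \<in> Q")
            case True then show ?thesis using False unfolding u_def Q_def by simp
          next
            case sQ: False
            have "Dtilde opt P T u s \<le> Dtilde opt P T r s"
              using monoD[OF Dtilde_mono[OF mdp] ur] by (simp add: le_fun_def)
            also have "\<dots> = r s" using fixp by simp
            also have "\<dots> = u s" using False unfolding u_def by simp
            finally show ?thesis .
          qed
        qed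
      qed
      have "r \<le> u" unfolding r_def by (rule lfp_lowerbound[where f="Dtilde opt P T", OF pre])
      then have "r y \<le> u y" by (simp add: le_fun_def)
      moreover have "r y = \<infinity>" using yY unfolding Y_def Q_def by simp
      moreover have "u y = K" using yY unfolding u_def by simp
      ultimately show False using Kfin by simp
    qed
    define lev where "lev = (\<lambda>s. LEAST k. s \<in> L k)"
    have levL: "s \<in> L (lev s)" if sQ: "s \<in> Q" for s
    proof -
      obtain k where "s \<in> L k" using QW sQ unfolding W_def by auto
      then show ?thesis unfolding lev_def by (rule LeastI)
    qed
    have lev_le: "s \<in> L k \<Longrightarrow> lev s \<le> k" for s k unfolding lev_def by (rule Least_le)
    have levsuc: "C (L j) s" if "s \<in> Q" "lev s = Suc j" for s j
    proof -
      have "s \<in> L (Suc j)" using levL[OF that(1)] that(2) by simp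
      moreover have "s \<notin> L j" using lev_le[of s j] that(2) by auto
      ultimately show ?thesis using LS by auto
    qed
    have lev0: "lev s = 0 \<Longrightarrow> s \<in> Q \<Longrightarrow> s \<in> T" for s using levL L0 by fastforce
    define \<tau> where "\<tau> = (case opt of Minimize \<Rightarrow> \<sigma>
       | Maximize \<Rightarrow> (\<lambda>s. if s \<in> Q \<and> s \<notin> T then (SOME a. a \<in> Act P s \<and> Post P s a \<subseteq> Q \<and> Post P s a \<inter> L (lev s - 1) \<noteq> {}) else \<sigma> s))"
    have tau_prop: "\<tau> s \<in> Act P s \<and> Post P s (\<tau> s) \<subseteq> Q \<and> Post P s (\<tau> s) \<inter> L j \<noteq> {}"
      if "s \<in> Q" "s \<notin> T" "lev s = Suc j" for s j
    proof (cases opt)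
      case Minimize
      have "\<sigma> s \<in> Act P s" using strat by (simp add: is_strategy_def)
      moreover have "Post P s (\<sigma> s) \<inter> L j \<noteq> {}" using levsuc[OF that(1,3)] Minimize calculation unfolding C_def by auto
      moreover have "Post P s (\<sigma> s) \<subseteq> Q" using minclosed[OF Minimize that(1,2) calculation(1)] .
      ultimately show ?thesis using Minimize unfolding \<tau>_def by simp
    next
      case Maximize
      have ex: "\<exists>a. a \<in> Act P s \<and> Post P s a \<subseteq> Q \<and> Post P s a \<inter> L (lev s - 1) \<noteq> {}"
        using levsuc[OF that(1,3)] Maximize that(3) unfolding C_def by auto
      have "\<tau> s = (SOME a. a \<in> Act P s \<and> Post P s a \<subseteq> Q \<and> Post P s a \<inter> L (lev s - 1) \<noteq> {})"
        using Maximize that unfolding \<tau>_def by simp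
      then show ?thesis using someI_ex[OF ex] that(3) by simp
    qed
    have tau_strat: "is_strategy P \<tau>"
      unfolding is_strategy_def
    proof
      fix s
      show "\<tau> s \<in> Act P s"
      proof (cases "s \<in> Q \<and> s \<notin> T")
        case True
        then obtain j where "lev s = Suc j" using lev0 by (cases "lev s") auto
        then show ?thesis using tau_prop True by blast
      next
        case False
        then show ?thesis using strat unfolding \<tau>_def is_strategy_def by (cases opt) auto
      qed
    qed
    have reach1: "reach_prob P \<tau> T s0 = 1"
    proof (rule reach_one[OF P0 tau_strat, of Q lev])
      show "\<forall>s\<in>Q. lev s = 0 \<longrightarrow> s \<in> T" using lev0 by blast
      show "\<forall>s\<in>Q. \<forall>j. lev s = Suc j \<longrightarrow> s \<notin> T \<longrightarrow> (\<exists>s'\<in>Q. P s (\<tau> s) s' > 0 \<and> lev s' \<le> j)"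
      proof (intro ballI allI impI)
        fix s j assume "s \<in> Q" "lev s = Suc j" "s \<notin> T"
        then have tp: "Post P s (\<tau> s) \<subseteq> Q" "Post P s (\<tau> s) \<inter> L j \<noteq> {}" using tau_prop by blast+
        then obtain s' where "s' \<in> Post P s (\<tau> s)" "s' \<in> L j" by blast
        then show "\<exists>s'\<in>Q. P s (\<tau> s) s' > 0 \<and> lev s' \<le> j"
          using tp(1) lev_le unfolding Post_def by blast
      qed
      show "\<forall>s\<in>Q. s \<notin> T \<longrightarrow> (\<forall>s'. P s (\<tau> s) s' > 0 \<longrightarrow> s' \<in> Q)"
      proof (intro ballI allI impI)
        fix s s' assume "s \<in> Q" "s \<notin> T" "P s (\<tau> s) s' > 0"
        moreover obtain j where "lev s = Suc j" using lev0 \<open>s \<in> Q\<close> \<open>s \<notin> T\<close> by (cases "lev s") auto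
        ultimately show "s' \<in> Q" using tau_prop unfolding Post_def by blast
      qed
      show "s0 \<in> Q" using s0Q .
    qed
    have "reach_prob P \<sigma> T s0 \<ge> 1"
    proof (cases opt)
      case Minimize then show ?thesis using reach1 unfolding \<tau>_def by simp
    next
      case Maximize
      have bdd: "bdd_above ((\<lambda>\<sigma>'. reach_prob P \<sigma>' T s0) ` {\<sigma>'. is_strategy P \<sigma>'})"
        using reach_le1 by (intro bdd_aboveI2[where M=1]) auto
      have "reach_prob P \<tau> T s0 \<le> (SUP \<sigma>'\<in>{\<sigma>'. is_strategy P \<sigma>'}. reach_prob P \<sigma>' T s0)"
        by (rule cSUP_upper[OF _ bdd]) (use tau_strat in simp)
      then show ?thesis using optimal reach1 Maximize unfolding opt_reach_prob_def by simp
    qed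
    then show False using lt1 by simp
  qed
qed

end
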